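(* Suppose that for some instance of the EJR-Exact family, each execution of Alg1 uses $O(o_1)$ arithmetic operations, each execution of Alg2 uses $O(o_2)$, and the single execution of Alg3 uses $O(o_3)$. Then the instance can be executed using $O(nm^2k+k(o_1+o_2)+o_3)$ arithmetic operations in the worst case.
   Context: Setting: voters $N=\{1,\dots,n\}$, candidates $C=\{c_1,\dots,c_m\}$, approval ballots $A_i\subseteq C$, $k\le m$ a positive integer, $q=n/k$, $N_c=\{i: c\in A_i\}$, $n_c=|N_c|$. Convention $\max\emptyset=0$. The profile is given as an $n\times m$ 0/1 table (entry 1 iff the voter approves the candidate); complexity counts arithmetic operations. Dissatisfaction level: for $W\subseteq C$ with $|W|\le k$ and $c\in C\setminus W$, $\ell(c,W)$ is the largest nonnegative integer $\ell$ with $\ell=\lfloor \frac{k}{n}|\{i\in N: c\in A_i,\ |A_i\cap W|<\ell\}|\rfloor$. Along a run, $\ell_j(c)=\ell(c,W_j)$; for $c\in C\setminus W_j$, $i\in N_c$: $\ell_j(i,c)=\max_{c'\in A_i\setminus(W_j\cup\{c\})}\ell_j(c')$, $g_i^j(c)=0$ if $\ell_j(i,c)\le|A_i\cap W_j|$, and $g_i^j(c)=\frac{\ell_j(i,c)-|A_i\cap W_j|-1}{\ell_j(i,c)}$ otherwise. EJR-Exact family (parametrized by subprocedures Alg1, Alg2, Alg3): compute $\ell_0(c)=\lfloor k n_c/n\rfloor$ for all $c$; set $W_0=\emptyset$, $f_i^0=1$. For $j=1,\dots,k$: for each $c\in C\setminus W_{j-1}$ compute $x_c=\sum_{i\in N_c}(f_i^{j-1}-g_i^{j-1}(c))$.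 If some $c$ has $x_c\ge q$: Alg1 selects such a $w_j$; $f_i^j=f_i^{j-1}$ for $i\notin N_{w_j}$; Alg2 chooses $f_i^j$ for $i\in N_{w_j}$ with $0\le f_i^j\le f_i^{j-1}$, $\sum_{i\in N_{w_j}}(f_i^{j-1}-f_i^j)=q$, and $f_i^j\ge g_i^{j-1}(w_j)$ whenever $\ell_{j-1}(i,w_j)>|A_i\cap W_{j-1}|$; $W_j=W_{j-1}\cup\{w_j\}$; then for each $c\in C\setminus W_j$, start from $\ell_j(c)=\ell_{j-1}(c)$ and decrement it by 1 while $\ell_j(c)>\lfloor\frac{k}{n}|\{i: c\in A_i,\ |A_i\cap W_j|<\ell_j(c)\}|\rfloor$. Otherwise stop the loop. Finally, if fewer than $k$ candidates are selected, Alg3 adds candidates from the unselected ones until $k$ are selected. *)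

theory Defs
  imports Complex_Main
begin

(* Cost model: a shallow, cost-instrumented implementation of the generic part of
   EJR-Exact.  Every value the algorithm needs is computed by a function that returns
   a pair (value, number of arithmetic operations used).  Voters are 0..<n, candidates
   0..<m, and the profile is the 0/1 table  A i c  (True iff voter i approves c).
   Table look-ups, list/set membership and control flow are free; arithmetic
   operations (additions, subtractions, multiplications, divisions, floors,
   comparisons of numbers) are counted. *)

type_synonym profile = "nat \<Rightarrow> nat \<Rightarrow> bool"

fun countC :: "('a \<Rightarrow> bool) \<Rightarrow> 'a list \<Rightarrow> nat \<times> nat" where
  "countC P [] = (0, 0)"
| "countC P (x # xs) = (case countC P xs of (s, c) \<Rightarrow> (if P x then Suc s else s, c + 2))"

fun maxC :: "nat list \<Rightarrow> nat \<times> nat" where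
  "maxC [] = (0, 0)"
| "maxC (x # xs) = (case maxC xs of (s, c) \<Rightarrow> (max x s, Suc c))"

fun sumC :: "real list \<Rightarrow> real \<times> nat" where
  "sumC [] = (0, 0)"
| "sumC (x # xs) = (case sumC xs of (s, c) \<Rightarrow> (x + s, Suc c))"

definition approvedC :: "profile \<Rightarrow> nat \<Rightarrow> nat list \<Rightarrow> nat \<Rightarrow> nat \<times> nat" where
  "approvedC A m W i = countC (\<lambda>c. A i c \<and> c \<in> set W) [0..<m]"

definition ellC :: "profile \<Rightarrow> nat \<Rightarrow> nat list \<Rightarrow> (nat \<Rightarrow> nat) \<Rightarrow> nat \<Rightarrow> nat \<Rightarrow> nat \<times> nat" where
  "ellC A m W lv i c = maxC (map lv (filter (\<lambda>c'. A i c' \<and> c' \<notin> set W \<and> c' \<noteq> c) [0..<m]))"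

(* g_i(c) given a = |A_i \<inter> W| and l = \<ell>(i,c); costs 4 operations *)
definition gval :: "nat \<Rightarrow> nat \<Rightarrow> real" where
  "gval a l = (if l \<le> a then 0 else (real l - real a - 1) / real l)"

definition xC :: "profile \<Rightarrow> nat \<Rightarrow> nat \<Rightarrow> nat list \<Rightarrow> (nat \<Rightarrow> real) \<Rightarrow> (nat \<Rightarrow> nat)
                   \<Rightarrow> (nat \<Rightarrow> nat) \<Rightarrow> nat \<Rightarrow> real \<times> nat" where
  "xC A n m W f lv a c =
     (let terms = map (\<lambda>i. case ellC A m W lv i c of (l, cl) \<Rightarrow> (f i - gval (a i) l, cl + 4 + 1))
                      (filter (\<lambda>i. A i c) [0..<n])
      in case sumC (map fst terms) of (s, cs) \<Rightarrow> (s, cs + sum_list (map snd terms)))"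

definition ell0C :: "profile \<Rightarrow> nat \<Rightarrow> nat \<Rightarrow> nat \<Rightarrow> nat \<times> nat" where
  "ell0C A n k c = (case countC (\<lambda>i. A i c) [0..<n] of
      (nc, cc) \<Rightarrow> (nat \<lfloor>real k * real nc / real n\<rfloor>, cc + 3))"

primrec decC :: "profile \<Rightarrow> nat \<Rightarrow> nat \<Rightarrow> (nat \<Rightarrow> nat) \<Rightarrow> nat \<Rightarrow> nat \<Rightarrow> nat \<times> nat" where
  "decC A n k a c 0 = (case countC (\<lambda>i. A i c \<and> a i < 0) [0..<n] of (cnt, cc) \<Rightarrow> (0, cc + 4))"
| "decC A n k a c (Suc l) = (case countC (\<lambda>i. A i c \<and> a i < Suc l) [0..<n] of (cnt, cc) \<Rightarrow>
      (if real (Suc l) > real_of_int \<lfloor>real k / real n * real cnt\<rfloor>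
       then (case decC A n k a c l of (r, cr) \<Rightarrow> (r, cc + 4 + cr))
       else (Suc l, cc + 4)))"

(* Subprocedures: they receive the current state (W_{j-1} as a list, f^{j-1},
   \<ell>_{j-1}, and the x-values) and return their result together with their cost. *)
type_synonym alg1 = "nat list \<Rightarrow> (nat \<Rightarrow> real) \<Rightarrow> (nat \<Rightarrow> nat) \<Rightarrow> (nat \<Rightarrow> real) \<Rightarrow> nat \<times> nat"
type_synonym alg2 = "nat list \<Rightarrow> (nat \<Rightarrow> real) \<Rightarrow> (nat \<Rightarrow> nat) \<Rightarrow> (nat \<Rightarrow> real) \<Rightarrow> nat
                      \<Rightarrow> (nat \<Rightarrow> real) \<times> nat"
type_synonym alg3 = "nat list \<Rightarrow> (nat \<Rightarrow> real) \<Rightarrow> (nat \<Rightarrow> nat) \<Rightarrow> nat set \<times> nat"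

type_synonym state = "nat list \<times> (nat \<Rightarrow> real) \<times> (nat \<Rightarrow> nat)"

(* Stop: base cost of the final (failing) test.
   Continue: new state, base cost, Alg1 cost, Alg2 cost, whether Alg1/Alg2 met their specs *)
datatype step_res = Stop nat | Continue state nat nat nat bool

definition ejr_step :: "profile \<Rightarrow> nat \<Rightarrow> nat \<Rightarrow> nat \<Rightarrow> alg1 \<Rightarrow> alg2 \<Rightarrow> state \<Rightarrow> step_res" where
  "ejr_step A n m k Alg1 Alg2 st = (case st of (W, f, lv) \<Rightarrow>
     (let q = real n / real k;
          a = (\<lambda>i. fst (approvedC A m W i));
          costA = (\<Sum>i<n. snd (approvedC A m W i));
          U = filter (\<lambda>c. c \<notin> set W) [0..<m];
          x = (\<lambda>c. fst (xC A n m W f lv a c));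
          costX = (\<Sum>c\<leftarrow>U. snd (xC A n m W f lv a c) + 1)
      in if \<not> (\<exists>c\<in>set U. q \<le> x c) then Stop (1 + costA + costX)
         else (case Alg1 W f lv x of (w, c1) \<Rightarrow>
               (case Alg2 W f lv x w of (fw, c2) \<Rightarrow>
                (let f' = (\<lambda>i. if A i w then fw i else f i);
                     W' = W @ [w];
                     a' = (\<lambda>i. fst (approvedC A m W' i));
                     costA' = (\<Sum>i<n. snd (approvedC A m W' i));
                     U' = filter (\<lambda>c. c \<notin> set W') [0..<m];
                     lv' = (\<lambda>c. if c \<in> set W' then lv c else fst (decC A n k a' c (lv c)));
                     costD = (\<Sum>c\<leftarrow>U'. snd (decC A n k a' c (lv c)));
                     ok1 = (w < m \<and> w \<notin> set W \<and> q \<le> x w);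
                     ok2 = ((\<forall>i<n. A i w \<longrightarrow> 0 \<le> fw i \<and> fw i \<le> f i \<and>
                               (a i < fst (ellC A m W lv i w) \<longrightarrow>
                                  gval (a i) (fst (ellC A m W lv i w)) \<le> fw i))
                            \<and> (\<Sum>i | i < n \<and> A i w. f i - fw i) = q)
                 in Continue (W', f', lv') (1 + costA + costX + costA' + costD) c1 c2 (ok1 \<and> ok2))))))"

fun ejr_loop :: "profile \<Rightarrow> nat \<Rightarrow> nat \<Rightarrow> nat \<Rightarrow> alg1 \<Rightarrow> alg2 \<Rightarrow> nat \<Rightarrow> state
                  \<Rightarrow> state \<times> nat \<times> nat list \<times> nat list \<times> bool" where
  "ejr_loop A n m k Alg1 Alg2 0 st = (st, 0, [], [], True)"
| "ejr_loop A n m k Alg1 Alg2 (Suc j) st = (case ejr_step A n m k Alg1 Alg2 st of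
      Stop c \<Rightarrow> (st, c, [], [], True)
    | Continue st' c c1 c2 v \<Rightarrow> (case ejr_loop A n m k Alg1 Alg2 j st' of
         (st'', c', l1, l2, v') \<Rightarrow> (st'', c + c', c1 # l1, c2 # l2, v \<and> v')))"

record ejr_result =
  committee :: "nat set"
  base_cost :: nat          (* arithmetic operations outside the subprocedures *)
  alg1_costs :: "nat list"
  alg2_costs :: "nat list"
  alg3_cost :: nat          (* cost of the execution of Alg3 (0 if not executed) *)
  valid :: bool             (* all subprocedure outputs met their specifications *)

definition ejr_run :: "profile \<Rightarrow> nat \<Rightarrow> nat \<Rightarrow> nat \<Rightarrow> alg1 \<Rightarrow> alg2 \<Rightarrow> alg3 \<Rightarrow> ejr_result" where
  "ejr_run A n m k Alg1 Alg2 Alg3 =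
     (let lv0 = (\<lambda>c. fst (ell0C A n k c));
          cost0 = (\<Sum>c<m. snd (ell0C A n k c))
      in case ejr_loop A n m k Alg1 Alg2 k ([], (\<lambda>_. 1), lv0) of
           ((W, f, lv), c, l1, l2, v) \<Rightarrow>
             (if length W < k
              then (case Alg3 W f lv of (Wf, c3) \<Rightarrow>
                      \<lparr>committee = Wf, base_cost = cost0 + c + 1, alg1_costs = l1, alg2_costs = l2,
                       alg3_cost = c3,
                       valid = (v \<and> set W \<subseteq> Wf \<and> Wf \<subseteq> {..<m} \<and> card Wf = k)\<rparr>)
              else \<lparr>committee = set W, base_cost = cost0 + c + 1, alg1_costs = l1, alg2_costs = l2,
                    alg3_cost = 0, valid = v\<rparr>))"

definition total_cost :: "ejr_result \<Rightarrow> nat" where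
  "total_cost R = base_cost R + sum_list (alg1_costs R) + sum_list (alg2_costs R) + alg3_cost R"

end

theory Submission
  imports Defs
begin

lemma countC_cost: "snd (countC P xs) = 2 * length xs"
  by (induction xs) (auto split: prod.splits)

lemma countC_val: "fst (countC P xs) \<le> length xs"
  by (induction xs) (auto split: prod.splits)

lemma maxC_cost: "snd (maxC xs) = length xs"
  by (induction xs) (auto split: prod.splits)

lemma sumC_cost: "snd (sumC xs) = length xs"
  by (induction xs) (auto split: prod.splits)

lemma sum_list_map_le:
  "(\<And>x. x \<in> set xs \<Longrightarrow> f x \<le> (b::nat)) \<Longrightarrow> sum_list (map f xs) \<le> length xs * b"
  by (induction xs) (auto simp: add_mono)

lemma approvedC_cost: "snd (approvedC A m W i) = 2 * m"
  by (simp add: approvedC_def countC_cost)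

lemma ellC_cost: "snd (ellC A m W lv i c) \<le> m"
proof -
  have "length (filter (\<lambda>c'. A i c' \<and> c' \<notin> set W \<and> c' \<noteq> c) [0..<m]) \<le> m"
    using length_filter_le[of _ "[0..<m]"] by simp
  then show ?thesis by (simp add: ellC_def maxC_cost)
qed

lemma xC_cost: "snd (xC A n m W f lv a c) \<le> n * (m + 6)"
proof -
  define L where "L = filter (\<lambda>i. A i c) [0..<n]"
  define terms where "terms = map (\<lambda>i. case ellC A m W lv i c of (l, cl) \<Rightarrow> (f i - gval (a i) l, cl + 4 + 1)) L"
  have lenL: "length L \<le> n" unfolding L_def using length_filter_le[of _ "[0..<n]"] by simp
  have "snd (xC A n m W f lv a c) = length terms + sum_list (map snd terms)"
    unfolding xC_def Let_def L_def[symmetric] terms_def[symmetric]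
    using sumC_cost[of "map fst terms"] by (auto split: prod.splits)
  also have "sum_list (map snd terms) \<le> length terms * (m + 5)"
  proof (rule sum_list_map_le)
    fix x assume "x \<in> set terms"
    then obtain i where "x = (case ellC A m W lv i c of (l, cl) \<Rightarrow> (f i - gval (a i) l, cl + 4 + 1))"
      unfolding terms_def by auto
    then show "snd x \<le> m + 5" using ellC_cost[of A m W lv i c] by (auto split: prod.splits)
  qed
  finally have "snd (xC A n m W f lv a c) \<le> length terms * (m + 6)" by (simp add: algebra_simps)
  also have "\<dots> \<le> n * (m + 6)" using lenL unfolding terms_def by simp
  finally show ?thesis .
qed

lemma decC_bound: "fst (decC A n k a c l) \<le> l \<and> snd (decC A n k a c l) \<le> (l + 1) * (2 * n + 4)"
proof (induction l)
  case 0
  then show ?case using countC_cost[of "\<lambda>i. A i c \<and> a i < 0" "[0..<n]"]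
    by (auto split: prod.splits)
next
  case (Suc l)
  then show ?case using countC_cost[of "\<lambda>i. A i c \<and> a i < Suc l" "[0..<n]"]
    by (auto split: prod.splits)
qed

lemma ell0C_bound: "0 < n \<Longrightarrow> fst (ell0C A n k c) \<le> k \<and> snd (ell0C A n k c) = 2 * n + 3"
proof -
  assume n: "0 < n"
  obtain nc cc where e: "countC (\<lambda>i. A i c) [0..<n] = (nc, cc)" by force
  have cc: "cc = 2 * n" using countC_cost[of "\<lambda>i. A i c" "[0..<n]"] e by simp
  have "nc \<le> n" using countC_val[of "\<lambda>i. A i c" "[0..<n]"] e by simp
  then have "real k * real nc / real n \<le> real k"
    using n by (simp add: divide_le_eq mult_left_mono)
  then have "\<lfloor>real k * real nc / real n\<rfloor> \<le> int k"
    by (metis floor_mono floor_of_nat)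
  then show ?thesis using e cc by (simp add: ell0C_def)
qed

definition B :: "nat \<Rightarrow> nat \<Rightarrow> nat \<Rightarrow> nat" where
  "B n m k = 1 + 2*n*m + m * (n * (m + 6) + 1) + 2*n*m + m * ((k + 1) * (2 * n + 4))"

lemma costA_eq: "(\<Sum>i<n. snd (approvedC A m W i)) = 2*n*m"
  by (simp add: approvedC_cost)

lemma costX_le: "(\<Sum>c\<leftarrow>filter P [0..<m]. snd (xC A n m W f lv a c) + 1) \<le> m * (n * (m + 6) + 1)"
proof -
  have "(\<Sum>c\<leftarrow>filter P [0..<m]. snd (xC A n m W f lv a c) + 1) \<le> length (filter P [0..<m]) * (n * (m + 6) + 1)"
    by (rule sum_list_map_le) (use xC_cost in auto)
  also have "\<dots> \<le> m * (n * (m + 6) + 1)"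
    using length_filter_le[of P "[0..<m]"] by (intro mult_right_mono) simp_all
  finally show ?thesis .
qed

lemma costD_le: "(\<forall>c. lv c \<le> k) \<Longrightarrow>
  (\<Sum>c\<leftarrow>filter P [0..<m]. snd (decC A n k a c (lv c))) \<le> m * ((k + 1) * (2 * n + 4))"
proof -
  assume lv: "\<forall>c. lv c \<le> k"
  have "(\<Sum>c\<leftarrow>filter P [0..<m]. snd (decC A n k a c (lv c))) \<le> length (filter P [0..<m]) * ((k + 1) * (2 * n + 4))"
  proof (rule sum_list_map_le)
    fix c
    have "snd (decC A n k a c (lv c)) \<le> (lv c + 1) * (2 * n + 4)" using decC_bound by blast
    also have "\<dots> \<le> (k + 1) * (2 * n + 4)" using lv by simp
    finally show "snd (decC A n k a c (lv c)) \<le> (k + 1) * (2 * n + 4)" .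
  qed
  also have "\<dots> \<le> m * ((k + 1) * (2 * n + 4))"
    using length_filter_le[of P "[0..<m]"] by (intro mult_right_mono) simp_all
  finally show ?thesis .
qed

lemma step_bound:
  assumes lv: "\<forall>c. lv c \<le> k"
  shows "(\<forall>c. ejr_step A n m k Alg1 Alg2 (W,f,lv) = Stop c \<longrightarrow> c \<le> B n m k) \<and>
         (\<forall>st' c c1 c2 v. ejr_step A n m k Alg1 Alg2 (W,f,lv) = Continue st' c c1 c2 v \<longrightarrow>
              c \<le> B n m k \<and> (\<forall>x. snd (snd st') x \<le> k))"
proof -
  define a where "a = (\<lambda>i. fst (approvedC A m W i))"
  define X where "X = (\<lambda>c. fst (xC A n m W f lv a c))"
  obtain w c1 where a1: "Alg1 W f lv X = (w, c1)" by force
  obtain fw c2 where a2: "Alg2 W f lv X w = (fw, c2)" by force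
  have lvnew: "\<And>a W'. \<forall>c. (if c \<in> set W' then lv c else fst (decC A n k a c (lv c))) \<le> k"
  proof (intro allI)
    fix a W' c
    show "(if c \<in> set W' then lv c else fst (decC A n k a c (lv c))) \<le> k"
      using lv decC_bound[of A n k a c "lv c"] by (auto intro: order.trans)
  qed
  have cA: "\<And>W. (\<Sum>i<n. snd (approvedC A m W i)) = 2*n*m" by (rule costA_eq)
  have cX: "(\<Sum>c\<leftarrow>filter (\<lambda>c. c \<notin> set W) [0..<m]. snd (xC A n m W f lv a c) + 1) \<le> m * (n * (m + 6) + 1)"
    by (rule costX_le)
  have cD: "\<And>a'. (\<Sum>c\<leftarrow>filter (\<lambda>c. c \<notin> set (W @ [w])) [0..<m]. snd (decC A n k a' c (lv c))) \<le> m * ((k + 1) * (2 * n + 4))"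
    by (rule costD_le[OF lv])
  define R where "R = (\<lambda>v. (if \<not> (\<exists>c\<in>set (filter (\<lambda>c. c \<notin> set W) [0..<m]). real n / real k \<le> X c)
     then Stop (1 + (\<Sum>i<n. snd (approvedC A m W i)) + (\<Sum>c\<leftarrow>filter (\<lambda>c. c \<notin> set W) [0..<m]. snd (xC A n m W f lv a c) + 1))
     else Continue (W @ [w], (\<lambda>i. if A i w then fw i else f i),
        (\<lambda>c. if c \<in> set (W @ [w]) then lv c else fst (decC A n k (\<lambda>i. fst (approvedC A m (W @ [w]) i)) c (lv c))))
       (1 + (\<Sum>i<n. snd (approvedC A m W i)) + (\<Sum>c\<leftarrow>filter (\<lambda>c. c \<notin> set W) [0..<m]. snd (xC A n m W f lv a c) + 1)
          + (\<Sum>i<n. snd (approvedC A m (W @ [w]) i))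
          + (\<Sum>c\<leftarrow>filter (\<lambda>c. c \<notin> set (W @ [w])) [0..<m]. snd (decC A n k (\<lambda>i. fst (approvedC A m (W @ [w]) i)) c (lv c))))
       c1 c2 v))"
  have "\<exists>v. ejr_step A n m k Alg1 Alg2 (W,f,lv) = R v"
    unfolding R_def ejr_step_def Let_def prod.case
    unfolding a_def[symmetric]
    unfolding X_def[symmetric]
    unfolding a1 a2 prod.case
    unfolding X_def
    by (rule exI, rule refl)
  then obtain v where e: "ejr_step A n m k Alg1 Alg2 (W,f,lv) = R v" by blast
  show ?thesis
  proof (cases "\<exists>c\<in>set (filter (\<lambda>c. c \<notin> set W) [0..<m]). real n / real k \<le> X c")
    case False
    then show ?thesis unfolding e R_def using cX by (simp add: cA B_def)
  next
    case True
    have "1 + 2*n*m + m * (n * (m + 6) + 1) + 2*n*m + m * ((k + 1) * (2 * n + 4)) \<ge>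
      1 + (\<Sum>i<n. snd (approvedC A m W i)) + (\<Sum>c\<leftarrow>filter (\<lambda>c. c \<notin> set W) [0..<m]. snd (xC A n m W f lv a c) + 1)
          + (\<Sum>i<n. snd (approvedC A m (W @ [w]) i))
          + (\<Sum>c\<leftarrow>filter (\<lambda>c. c \<notin> set (W @ [w])) [0..<m]. snd (decC A n k (\<lambda>i. fst (approvedC A m (W @ [w]) i)) c (lv c)))"
      unfolding cA using cX cD[of "\<lambda>i. fst (approvedC A m (W @ [w]) i)"] by linarith
    moreover have "\<forall>x. (if x \<in> set (W @ [w]) then lv x else fst (decC A n k (\<lambda>i. fst (approvedC A m (W @ [w]) i)) x (lv x))) \<le> k"
      by (rule lvnew)
    ultimately show ?thesis unfolding e R_def using True apply (simp only: B_def if_False not_not simp_thms step_res.inject step_res.distinct snd_conv)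
      apply (intro allI impI conjI)
       apply (elim conjE) apply hypsubst apply assumption
      apply (elim conjE) apply hypsubst apply (simp only: snd_conv)
      done
  qed
qed

lemma loop_bound:
  "\<forall>c. lv c \<le> k \<Longrightarrow> ejr_loop A n m k Alg1 Alg2 j (W,f,lv) = (st'', c, l1, l2, v) \<Longrightarrow>
   c \<le> j * B n m k \<and> length l1 \<le> j \<and> length l2 \<le> j"
proof (induction j arbitrary: W f lv st'' c l1 l2 v)
  case 0
  then show ?case by simp
next
  case (Suc j)
  note sb = step_bound[OF Suc.prems(1), of A n m Alg1 Alg2 W f]
  show ?case
  proof (cases "ejr_step A n m k Alg1 Alg2 (W,f,lv)")
    case (Stop c0)
    then show ?thesis using Suc.prems(2) sb by (auto simp: add_increasing2)
  next
    case (Continue st' c0 c1 c2 v0)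
    obtain W' f' lv' where st': "st' = (W', f', lv')" by (cases st') auto
    obtain st2 cc l1' l2' v' where r: "ejr_loop A n m k Alg1 Alg2 j st' = (st2, cc, l1', l2', v')"
      by (cases "ejr_loop A n m k Alg1 Alg2 j st'") auto
    have c0: "c0 \<le> B n m k" and lvk: "\<forall>x. lv' x \<le> k" using sb Continue st' by auto
    have ih: "cc \<le> j * B n m k \<and> length l1' \<le> j \<and> length l2' \<le> j"
      using Suc.IH[OF lvk] r st' by blast
    have "c = c0 + cc" "l1 = c1 # l1'" "l2 = c2 # l2'"
      using Suc.prems(2) Continue r by auto
    then show ?thesis using ih c0 by auto
  qed
qed

lemma sum_list_le_len: "(\<forall>c\<in>set l. c \<le> (o1::nat)) \<Longrightarrow> length l \<le> k \<Longrightarrow> sum_list l \<le> k * o1"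
proof -
  assume a: "\<forall>c\<in>set l. c \<le> o1" and b: "length l \<le> k"
  have "sum_list l = sum_list (map (\<lambda>x. x) l)" by simp
  also have "\<dots> \<le> length l * o1" by (rule sum_list_map_le) (use a in auto)
  also have "\<dots> \<le> k * o1" using b by simp
  finally show ?thesis .
qed

lemma B_le: "1 \<le> n \<Longrightarrow> 1 \<le> k \<Longrightarrow> k \<le> m \<Longrightarrow> B n m k \<le> 25 * (n * m * m)"
proof -
  assume n: "1 \<le> n" and k: "1 \<le> k" and km: "k \<le> m"
  have m: "1 \<le> m" using k km by simp
  have h1: "n * m \<le> n * m * m" using m by simp
  have h2: "m \<le> n * m * m"
  proof -
    have "m \<le> m * m" using m by simp
    also have "\<dots> \<le> n * m * m" using n by simp
    finally show ?thesis .
  qed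
  have h3: "1 \<le> n * m * m" using m n by simp
  have h4: "(k + 1) * (2 * n + 4) \<le> (2 * m) * (6 * n)"
    using km k n by (intro mult_le_mono) auto
  have h5: "m * ((k + 1) * (2 * n + 4)) \<le> 12 * (n * m * m)"
    using mult_le_mono2[OF h4, of m] by (simp add: algebra_simps)
  have "B n m k = 1 + 4 * (n * m) + n * m * m + 6 * (n * m) + m + m * ((k + 1) * (2 * n + 4))"
    by (simp add: B_def algebra_simps)
  also have "\<dots> \<le> 25 * (n * m * m)" using h1 h2 h3 h5 by linarith
  finally show ?thesis .
qed

theorem mainTheorem8:
  shows "\<exists>C::nat. \<forall>(A::profile) (n::nat) (m::nat) (k::nat) (Alg1::alg1) (Alg2::alg2) (Alg3::alg3)
            (o1::nat) (o2::nat) (o3::nat).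
     0 < n \<longrightarrow> 0 < k \<longrightarrow> k \<le> m \<longrightarrow>
     valid (ejr_run A n m k Alg1 Alg2 Alg3) \<longrightarrow>
     (\<forall>c\<in>set (alg1_costs (ejr_run A n m k Alg1 Alg2 Alg3)). c \<le> o1) \<longrightarrow>
     (\<forall>c\<in>set (alg2_costs (ejr_run A n m k Alg1 Alg2 Alg3)). c \<le> o2) \<longrightarrow>
     alg3_cost (ejr_run A n m k Alg1 Alg2 Alg3) \<le> o3 \<longrightarrow>
     total_cost (ejr_run A n m k Alg1 Alg2 Alg3) \<le> C * (n * m\<^sup>2 * k + k * (o1 + o2) + o3)"
proof (intro exI allI impI)
  fix A n m k Alg1 Alg2 Alg3 o1 o2 o3
  assume n: "0 < n" and k: "0 < k" and km: "k \<le> m"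
    and va: "valid (ejr_run A n m k Alg1 Alg2 Alg3)"
    and h1: "\<forall>c\<in>set (alg1_costs (ejr_run A n m k Alg1 Alg2 Alg3)). c \<le> o1"
    and h2: "\<forall>c\<in>set (alg2_costs (ejr_run A n m k Alg1 Alg2 Alg3)). c \<le> o2"
    and h3: "alg3_cost (ejr_run A n m k Alg1 Alg2 Alg3) \<le> o3"
  let ?R = "ejr_run A n m k Alg1 Alg2 Alg3"
  obtain W f lv c l1 l2 v where r:
    "ejr_loop A n m k Alg1 Alg2 k ([], (\<lambda>_. 1), (\<lambda>c. fst (ell0C A n k c))) = ((W, f, lv), c, l1, l2, v)"
    by (metis prod.exhaust)
  have lv0: "\<forall>c. (\<lambda>c. fst (ell0C A n k c)) c \<le> k" using ell0C_bound[OF n] by auto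
  have lb: "c \<le> k * B n m k \<and> length l1 \<le> k \<and> length l2 \<le> k"
    using loop_bound[OF lv0 r] .
  have cost0: "(\<Sum>c<m. snd (ell0C A n k c)) = m * (2 * n + 3)"
    using ell0C_bound[OF n] by simp
  have R: "base_cost ?R = (\<Sum>c<m. snd (ell0C A n k c)) + c + 1 \<and> alg1_costs ?R = l1 \<and> alg2_costs ?R = l2"
    by (simp add: ejr_run_def Let_def r split: prod.split)
  have s1: "sum_list l1 \<le> k * o1" using sum_list_le_len[of l1 o1 k] h1 R lb by simp
  have s2: "sum_list l2 \<le> k * o2" using sum_list_le_len[of l2 o2 k] h2 R lb by simp
  have Bl: "B n m k \<le> 25 * (n * m * m)" using B_le n k km by simp
  define N where "N = n * m * m * k"
  have N1: "1 \<le> N" using n k km unfolding N_def by simp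
  have cN: "c \<le> 25 * N"
  proof -
    have "c \<le> k * B n m k" using lb by simp
    also have "\<dots> \<le> k * (25 * (n * m * m))" using Bl by simp
    finally show ?thesis unfolding N_def by (simp add: algebra_simps)
  qed
  have c0N: "m * (2 * n + 3) \<le> 5 * N"
  proof -
    have "m * (2 * n + 3) \<le> m * (5 * n)" using n by simp
    also have "\<dots> = 5 * (n * m * 1 * 1)" by simp
    also have "\<dots> \<le> 5 * N" unfolding N_def using k km
      by (intro mult_le_mono2 mult_le_mono) auto
    finally show ?thesis .
  qed
  have "total_cost ?R = m * (2 * n + 3) + c + 1 + sum_list l1 + sum_list l2 + alg3_cost ?R"
    using R cost0 by (simp add: total_cost_def)
  also have "\<dots> \<le> 31 * N + k * o1 + k * o2 + o3" using c0N cN N1 s1 s2 h3 by linarith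
  also have "\<dots> \<le> 31 * (n * m\<^sup>2 * k + k * (o1 + o2) + o3)"
    unfolding N_def power2_eq_square by (simp add: algebra_simps)
  finally show "total_cost ?R \<le> 31 * (n * m\<^sup>2 * k + k * (o1 + o2) + o3)" .
qed

end
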